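(* Let $(\mathbf f,\mathbf g)$ be a vector admissible system, $\epsilon\in\mathcal E$, $L,w\in\mathbb N$, and let $\mathbf X\in\mathcal X^{2L+w}$ be a fixed point of the one-sided spatially-coupled system. Then $$\mathrm{vec}\big(U'(\mathbf X;\epsilon)\big)\cdot\mathrm{vec}(\mathbf S\mathbf X-\mathbf X)=0,$$ where $U'(\mathbf X;\epsilon)$ is the matrix of partial derivatives $[U'(\mathbf X;\epsilon)]_{i,j}=\partial U(\mathbf X;\epsilon)/\partial x_{i,j}$ of the coupled-system potential.
   Context: Let $d\in\mathbb N$, $\mathcal X=[0,1]^d$, $\mathcal E=[0,1]$, $\mathcal X^\circ=\mathcal X\setminus\{\mathbf 0\}$; vectors are row vectors and $\mathbf x\preceq\mathbf y$ means $x_i\le y_i$ for all $i$. Let $\mathbf D$ be a $d\times d$ positive diagonal matrix, $\mathbf f:\mathcal X\times\mathcal E\to\mathcal X$, $\mathbf g:\mathcal X\to\mathcal X$, and $F,G$ scalar functionals with $\nabla_{\mathbf x}F(\mathbf x;\epsilon)=\mathbf f(\mathbf x;\epsilon)\mathbf D$, $\nabla G(\mathbf x)=\mathbf g(\mathbf x)\mathbf D$, $F(\mathbf 0;\epsilon)=G(\mathbf 0)=0$. $(\mathbf f,\mathbf g)$ is a vector admissible system if: (i) $\mathbf f,\mathbf g$ are $C^2$; (ii) $\mathbf f(\mathbf x;\epsilon)$, $\mathbf g(\mathbf x)$ are non-decreasing in $\mathbf x$ w.r.t. $\preceq$; (iii) for $\mathbf x\in\mathcal X^\circ$, $\epsilon_1<\epsilon_2$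 implies $\mathbf f(\mathbf x;\epsilon_1)\preceq\mathbf f(\mathbf x;\epsilon_2)$ and $\mathbf f(\mathbf x;\epsilon_1)\ne\mathbf f(\mathbf x;\epsilon_2)$; (iv) $\mathbf f(\mathbf 0;\epsilon)=\mathbf f(\mathbf x;0)=\mathbf g(\mathbf 0)=\mathbf 0$, $F(\mathbf x;0)=0$. Matrices $\mathbf X\in\mathcal X^{2L+w}$ have rows $\mathbf x_{-L},\dots,\mathbf x_{L+w-1}$; vector functions act row-wise. $\mathbf A$ is the $(2L+1)\times(2L+w)$ matrix with rows indexed by $j\in\{-L,\dots,L\}$, columns by $k\in\{-L,\dots,L+w-1\}$, $A_{j,k}=1/w$ if $0\le k-j\le w-1$ and $0$ otherwise. Coupled-system potential: $U(\mathbf X;\epsilon)=\mathrm{Tr}(\mathbf g(\mathbf X)\mathbf D\mathbf X^{\mathsf T})-\sum_{i}G(\mathbf x_i)-\sum_{j=-L}^{L}F([\mathbf A\mathbf g(\mathbf X)]_j;\epsilon)$. $\mathbf S$ is the down-shift: $[\mathbf S\mathbf X]_{-L}=\mathbf 0$, $[\mathbf S\mathbf X]_i=\mathbf x_{i-1}$ for $i>-L$. $\mathrm{vec}$ stacks columns. Let $\epsilon_i=\epsilon$ for $i\in\{-L,\dots,L\}$ and $\epsilon_i=0$ otherwise, and $i_0=\lfloor (w-1)/2\rfloor$. A fixed point of the one-sided spatially-coupled system is a matrix $\mathbf X$ (with the convention $\mathbf x_i=\mathbf 0$ for $i<-L$) such that $\mathbf x_i=\frac1w\sum_{k=0}^{w-1}\mathbf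 f\big(\frac1w\sum_{j=0}^{w-1}\mathbf g(\mathbf x_{i+j-k});\epsilon_{i-k}\big)$ for $-L\le i\le i_0$, and $\mathbf x_i=\mathbf x_{i_0}$ for $i_0<i\le L+w-1$. *)

theory Defs
  imports "HOL-Analysis.Analysis"
begin

definition cube :: "(real^'d) set" where
  "cube = {x. \<forall>i. 0 \<le> x$i \<and> x$i \<le> 1}"

definition vle :: "real^'d \<Rightarrow> real^'d \<Rightarrow> bool" where
  "vle x y \<longleftrightarrow> (\<forall>i. x$i \<le> y$i)"

definition C2_on :: "'a::real_normed_vector set \<Rightarrow> ('a \<Rightarrow> 'b::real_normed_vector) \<Rightarrow> bool" where
  "C2_on S h \<longleftrightarrow>
     (\<exists>h' :: 'a \<Rightarrow> ('a \<Rightarrow>\<^sub>L 'b). \<exists>h'' :: 'a \<Rightarrow> ('a \<Rightarrow>\<^sub>L ('a \<Rightarrow>\<^sub>L 'b)).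
        (\<forall>x\<in>S. (h has_derivative blinfun_apply (h' x)) (at x within S)
              \<and> (h' has_derivative blinfun_apply (h'' x)) (at x within S))
        \<and> continuous_on S h'')"

text \<open>Vector admissible system (f,g) with potentials F, G and diagonal matrix D = diag dd.\<close>
definition vector_admissible ::
  "(real^'d \<Rightarrow> real \<Rightarrow> real^'d) \<Rightarrow> (real^'d \<Rightarrow> real^'d) \<Rightarrow>
   (real^'d \<Rightarrow> real \<Rightarrow> real) \<Rightarrow> (real^'d \<Rightarrow> real) \<Rightarrow> real^'d \<Rightarrow> bool" where
  "vector_admissible f g F G dd \<longleftrightarrow>
     (\<forall>c. 0 < dd$c)
   \<and> (\<forall>x\<in>cube. \<forall>e\<in>{0..1}. f x e \<in> cube)
   \<and> (\<forall>x\<in>cube. g x \<in> cube)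
   \<and> (\<forall>e\<in>{0..1}. \<forall>x\<in>cube. ((\<lambda>y. F y e) has_derivative (\<lambda>h. \<Sum>c\<in>UNIV. f x e $ c * dd $ c * h $ c)) (at x within cube))
   \<and> (\<forall>x\<in>cube. (G has_derivative (\<lambda>h. \<Sum>c\<in>UNIV. g x $ c * dd $ c * h $ c)) (at x within cube))
   \<and> (\<forall>e\<in>{0..1}. F 0 e = 0) \<and> G 0 = 0
   \<and> C2_on (cube \<times> {0..1}) (\<lambda>p. f (fst p) (snd p))
   \<and> C2_on cube g
   \<and> (\<forall>e\<in>{0..1}. \<forall>x\<in>cube. \<forall>y\<in>cube. vle x y \<longrightarrow> vle (f x e) (f y e))
   \<and> (\<forall>x\<in>cube. \<forall>y\<in>cube. vle x y \<longrightarrow> vle (g x) (g y))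
   \<and> (\<forall>x\<in>cube - {0}. \<forall>e1\<in>{0..1}. \<forall>e2\<in>{0..1}.
         e1 < e2 \<longrightarrow> vle (f x e1) (f x e2) \<and> f x e1 \<noteq> f x e2)
   \<and> (\<forall>e\<in>{0..1}. f 0 e = 0) \<and> (\<forall>x\<in>cube. f x 0 = 0) \<and> g 0 = 0
   \<and> (\<forall>x\<in>cube. F x 0 = 0)"

text \<open>Coupled-system potential U(X;e); the matrix X has rows X i, i = -L..L+w-1.\<close>
definition Ucp ::
  "(real^'d \<Rightarrow> real^'d) \<Rightarrow> (real^'d \<Rightarrow> real \<Rightarrow> real) \<Rightarrow> (real^'d \<Rightarrow> real) \<Rightarrow> real^'d \<Rightarrow>
   nat \<Rightarrow> nat \<Rightarrow> (int \<Rightarrow> real^'d) \<Rightarrow> real \<Rightarrow> real" where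
  "Ucp g F G dd L w X e =
     (\<Sum>i\<in>{- int L .. int L + int w - 1}. \<Sum>c\<in>UNIV. g (X i) $ c * dd $ c * X i $ c)
   - (\<Sum>i\<in>{- int L .. int L + int w - 1}. G (X i))
   - (\<Sum>j\<in>{- int L .. int L}. F ((1 / real w) *\<^sub>R (\<Sum>k\<in>{j .. j + int w - 1}. g (X k))) e)"

definition one_sided_fp ::
  "(real^'d \<Rightarrow> real \<Rightarrow> real^'d) \<Rightarrow> (real^'d \<Rightarrow> real^'d) \<Rightarrow> nat \<Rightarrow> nat \<Rightarrow> real \<Rightarrow>
   (int \<Rightarrow> real^'d) \<Rightarrow> bool" where
  "one_sided_fp f g L w e X \<longleftrightarrow>
     (let i0 = (int w - 1) div 2;
          eps = (\<lambda>i::int. if - int L \<le> i \<and> i \<le> int L then e else 0)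
      in (\<forall>i < - int L. X i = 0)
       \<and> (\<forall>i\<in>{- int L .. i0}.
            X i = (1 / real w) *\<^sub>R (\<Sum>k\<in>{0 .. int w - 1}.
                    f ((1 / real w) *\<^sub>R (\<Sum>j\<in>{0 .. int w - 1}. g (X (i + j - k)))) (eps (i - k))))
       \<and> (\<forall>i > i0. X i = X i0))"

definition shiftS :: "nat \<Rightarrow> (int \<Rightarrow> real^'d) \<Rightarrow> int \<Rightarrow> real^'d" where
  "shiftS L X i = (if i = - int L then 0 else X (i - 1))"

end

theory Submission
  imports Defs
begin

lemma avg_cube:
  fixes g :: "real^'d \<Rightarrow> real^'d" and Y :: "int \<Rightarrow> real^'d"
  assumes "\<And>k. g (Y k) \<in> cube" "w \<ge> 1"
  shows "(1 / real w) *\<^sub>R (\<Sum>k\<in>{j .. j + int w - 1}. g (Y k)) \<in> cube"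
proof -
  have card: "card {j .. j + int w - 1} = w" by simp
  show ?thesis unfolding cube_def
  proof (intro CollectI allI conjI)
    fix c
    have b: "0 \<le> g (Y k) $ c \<and> g (Y k) $ c \<le> 1" for k using assms(1)[of k] by (auto simp: cube_def)
    have "0 \<le> (\<Sum>k\<in>{j .. j + int w - 1}. g (Y k) $ c)" using b by (simp add: sum_nonneg)
    moreover have "(\<Sum>k\<in>{j .. j + int w - 1}. g (Y k) $ c) \<le> (\<Sum>k\<in>{j .. j + int w - 1}. 1)"
      using b by (intro sum_mono) auto
    ultimately show "0 \<le> ((1 / real w) *\<^sub>R (\<Sum>k\<in>{j .. j + int w - 1}. g (Y k))) $ c"
      "((1 / real w) *\<^sub>R (\<Sum>k\<in>{j .. j + int w - 1}. g (Y k))) $ c \<le> 1"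
      using assms(2) card by (auto simp: sum_component field_simps)
  qed
qed

lemma Ucp_partial:
  fixes f :: "real^'d \<Rightarrow> real \<Rightarrow> real^'d" and g :: "real^'d \<Rightarrow> real^'d"
    and F :: "real^'d \<Rightarrow> real \<Rightarrow> real" and G :: "real^'d \<Rightarrow> real"
    and dd :: "real^'d" and e :: real and L w :: nat and X :: "int \<Rightarrow> real^'d"
    and g' :: "real^'d \<Rightarrow> ((real^'d) \<Rightarrow>\<^sub>L (real^'d))"
  assumes gd: "\<forall>x\<in>cube. (g has_derivative blinfun_apply (g' x)) (at x within cube)"
    and gc: "\<forall>x\<in>cube. g x \<in> cube"
    and Gd: "\<forall>x\<in>cube. (G has_derivative (\<lambda>h. \<Sum>c\<in>UNIV. g x $ c * dd $ c * h $ c)) (at x within cube)"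
    and Fd: "\<forall>x\<in>cube. ((\<lambda>y. F y e) has_derivative (\<lambda>h. \<Sum>c\<in>UNIV. f x e $ c * dd $ c * h $ c)) (at x within cube)"
    and Xc: "\<forall>k. X k \<in> cube"
    and w: "w \<ge> 1" and iR: "i \<in> {- int L .. int L + int w - 1}"
  shows "((\<lambda>t. Ucp g F G dd L w (X(i := (\<chi> k. if k = c then t else X i $ k))) e)
     has_real_derivative
   (\<Sum>c'\<in>UNIV. blinfun_apply (g' (X i)) (axis c 1) $ c' * dd $ c' * (X i $ c' - (1 / real w) *
      (\<Sum>j\<in>{- int L .. int L}. if j \<le> i \<and> i \<le> j + int w - 1
          then f ((1 / real w) *\<^sub>R (\<Sum>k\<in>{j .. j + int w - 1}. g (X k))) e $ c' else 0))))
   (at (X i $ c) within {0..1})"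
proof -
  define a :: "real^'d" where "a = axis c 1"
  define dg where "dg = blinfun_apply (g' (X i)) a"
  define t0 where "t0 = X i $ c"
  define v where "v t = (\<chi> k. if k = c then t else X i $ k)" for t
  define P where "P t = X(i := v t)" for t
  define W where "W = at t0 within {0..1::real}"
  have t0: "t0 \<in> {0..1}" using Xc unfolding t0_def cube_def by auto
  have vt0: "v t0 = X i" unfolding v_def t0_def by (simp add: vec_eq_iff)
  have Pt0: "P t0 = X" unfolding P_def using vt0 by auto
  have vc: "v t \<in> cube" if "t \<in> {0..1}" for t
    using Xc that unfolding v_def cube_def by auto
  have Pc: "P t k \<in> cube" if "t \<in> {0..1}" for t k
    using vc[OF that] Xc unfolding P_def by auto
  have veq: "v = (\<lambda>t. X i + (t - t0) *\<^sub>R a)"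
    unfolding v_def a_def t0_def by (auto simp: vec_eq_iff axis_def)
  have dv: "(v has_derivative (\<lambda>h. h *\<^sub>R a)) W"
    unfolding veq W_def by (auto intro!: derivative_eq_intros)
  have dP: "((\<lambda>t. P t k) has_derivative (\<lambda>h. if k = i then h *\<^sub>R a else 0)) W" for k
    using dv by (cases "k = i") (auto simp: P_def)
  have dPc: "((\<lambda>t. P t k $ c') has_derivative (\<lambda>h. (if k = i then h *\<^sub>R a else 0) $ c')) W" for k c'
    using bounded_linear.has_derivative[OF bounded_linear_vec_nth dP[of k]] .
  have dgv: "((\<lambda>t. g (v t)) has_derivative (\<lambda>h. h *\<^sub>R dg)) W"
  proof -
    have "((\<lambda>t. g (v t)) has_derivative (\<lambda>y. blinfun_apply (g' (v t0)) (y *\<^sub>R a))) W"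
      unfolding W_def
      by (rule has_derivative_in_compose2[of cube g "\<lambda>x. blinfun_apply (g' x)"])
         (use gd vc t0 dv in \<open>auto simp: W_def\<close>)
    then show ?thesis by (simp add: vt0 dg_def blinfun.scaleR_right)
  qed
  have dgP: "((\<lambda>t. g (P t k)) has_derivative (\<lambda>h. if k = i then h *\<^sub>R dg else 0)) W" for k
    using dgv by (cases "k = i") (auto simp: P_def)
  have dgPc: "((\<lambda>t. g (P t k) $ c') has_derivative (\<lambda>h. (if k = i then h *\<^sub>R dg else 0) $ c')) W" for k c'
    using bounded_linear.has_derivative[OF bounded_linear_vec_nth dgP[of k]] .
  have dGP: "((\<lambda>t. G (P t k)) has_derivative (\<lambda>h. if k = i then (\<Sum>c'\<in>UNIV. g (X i) $ c' * dd $ c' * (h *\<^sub>R a) $ c') else 0)) W" for k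
  proof (cases "k = i")
    case True
    have "((\<lambda>t. G (v t)) has_derivative (\<lambda>y. (\<Sum>c'\<in>UNIV. g (v t0) $ c' * dd $ c' * (y *\<^sub>R a) $ c'))) W"
      unfolding W_def
      by (rule has_derivative_in_compose2[of cube G "\<lambda>x h. \<Sum>c\<in>UNIV. g x $ c * dd $ c * h $ c"])
         (use Gd vc t0 dv in \<open>auto simp: W_def\<close>)
    then show ?thesis using True by (simp add: vt0 P_def)
  qed (auto simp: P_def)
  define avg where "avg Y j = (1 / real w) *\<^sub>R (\<Sum>k\<in>{j .. j + int w - 1}. g (Y k))" for Y j
  have avgc: "avg (P t) j \<in> cube" if "t \<in> {0..1}" for t j
    unfolding avg_def by (rule avg_cube) (use Pc[OF that] gc w in auto)
  have davg: "((\<lambda>t. avg (P t) j) has_derivative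
      (\<lambda>h. (1 / real w) *\<^sub>R (\<Sum>k\<in>{j .. j + int w - 1}. if k = i then h *\<^sub>R dg else 0))) W" for j
    unfolding avg_def by (auto intro!: derivative_eq_intros dgP)
  have dF: "((\<lambda>t. F (avg (P t) j) e) has_derivative
      (\<lambda>h. \<Sum>c'\<in>UNIV. f (avg X j) e $ c' * dd $ c' *
          ((1 / real w) *\<^sub>R (\<Sum>k\<in>{j .. j + int w - 1}. if k = i then h *\<^sub>R dg else 0)) $ c')) W" for j
  proof -
    have "((\<lambda>t. F (avg (P t) j) e) has_derivative
      (\<lambda>h. \<Sum>c'\<in>UNIV. f (avg (P t0) j) e $ c' * dd $ c' *
          ((1 / real w) *\<^sub>R (\<Sum>k\<in>{j .. j + int w - 1}. if k = i then h *\<^sub>R dg else 0)) $ c')) W"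
      unfolding W_def
      by (rule has_derivative_in_compose2[of cube "\<lambda>y. F y e" "\<lambda>x h. \<Sum>c\<in>UNIV. f x e $ c * dd $ c * h $ c"])
         (use Fd avgc t0 davg in \<open>auto simp: W_def\<close>)
    then show ?thesis by (simp add: Pt0)
  qed
  have dS1: "((\<lambda>t. g (P t i') $ c' * dd $ c' * P t i' $ c') has_derivative
      (\<lambda>h. g (P t0 i') $ c' * (dd $ c' * (if i' = i then h *\<^sub>R a else 0) $ c')
          + (if i' = i then h *\<^sub>R dg else 0) $ c' * dd $ c' * P t0 i' $ c')) W" for i' c'
    unfolding W_def
    by (rule has_derivative_eq_rhs, rule has_derivative_mult[OF has_derivative_mult[OF dgPc[unfolded W_def] has_derivative_const] dPc[unfolded W_def]])
       (auto simp: algebra_simps fun_eq_iff)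
  have Ueq: "(\<lambda>t. Ucp g F G dd L w (X(i := (\<chi> k. if k = c then t else X i $ k))) e) =
     (\<lambda>t. (\<Sum>i'\<in>{- int L .. int L + int w - 1}. \<Sum>c'\<in>UNIV. g (P t i') $ c' * dd $ c' * P t i' $ c')
   - (\<Sum>i'\<in>{- int L .. int L + int w - 1}. G (P t i'))
   - (\<Sum>j\<in>{- int L .. int L}. F (avg (P t) j) e))"
    unfolding Ucp_def P_def v_def avg_def by simp
  have D: "((\<lambda>t. Ucp g F G dd L w (X(i := (\<chi> k. if k = c then t else X i $ k))) e) has_derivative
    (\<lambda>h. (\<Sum>i'\<in>{- int L .. int L + int w - 1}. \<Sum>c'\<in>UNIV.
          g (P t0 i') $ c' * (dd $ c' * (if i' = i then h *\<^sub>R a else 0) $ c')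
          + (if i' = i then h *\<^sub>R dg else 0) $ c' * dd $ c' * P t0 i' $ c')
      - (\<Sum>i'\<in>{- int L .. int L + int w - 1}. if i' = i then (\<Sum>c'\<in>UNIV. g (X i) $ c' * dd $ c' * (h *\<^sub>R a) $ c') else 0)
      - (\<Sum>j\<in>{- int L .. int L}. \<Sum>c'\<in>UNIV. f (avg X j) e $ c' * dd $ c' *
          ((1 / real w) *\<^sub>R (\<Sum>k\<in>{j .. j + int w - 1}. if k = i then h *\<^sub>R dg else 0)) $ c'))) W"
    unfolding Ueq
    by (intro has_derivative_diff has_derivative_sum dS1 dGP dF)
  define R where "R = {- int L .. int L + int w - 1}"
  have T1: "(\<Sum>i'\<in>R. \<Sum>c'\<in>UNIV.
          g (P t0 i') $ c' * (dd $ c' * (if i' = i then h *\<^sub>R a else 0) $ c')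
          + (if i' = i then h *\<^sub>R dg else 0) $ c' * dd $ c' * P t0 i' $ c')
     = (\<Sum>c'\<in>UNIV. g (X i) $ c' * (dd $ c' * (h *\<^sub>R a) $ c') + (h *\<^sub>R dg) $ c' * dd $ c' * X i $ c')" for h
  proof -
    have "(\<Sum>c'\<in>UNIV.
          g (P t0 i') $ c' * (dd $ c' * (if i' = i then h *\<^sub>R a else 0) $ c')
          + (if i' = i then h *\<^sub>R dg else 0) $ c' * dd $ c' * P t0 i' $ c')
       = (if i' = i then (\<Sum>c'\<in>UNIV. g (X i) $ c' * (dd $ c' * (h *\<^sub>R a) $ c') + (h *\<^sub>R dg) $ c' * dd $ c' * X i $ c') else 0)" for i'
      by (auto simp: Pt0)
    then show ?thesis using iR by (simp add: R_def)
  qed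
  have T2: "(\<Sum>i'\<in>R. if i' = i then (\<Sum>c'\<in>UNIV. g (X i) $ c' * dd $ c' * (h *\<^sub>R a) $ c') else 0)
     = (\<Sum>c'\<in>UNIV. g (X i) $ c' * dd $ c' * (h *\<^sub>R a) $ c')" for h
    using iR by (simp add: R_def)
  have T3: "(\<Sum>j\<in>{- int L .. int L}. \<Sum>c'\<in>UNIV. f (avg X j) e $ c' * dd $ c' *
          ((1 / real w) *\<^sub>R (\<Sum>k\<in>{j .. j + int w - 1}. if k = i then h *\<^sub>R dg else 0)) $ c')
     = (\<Sum>c'\<in>UNIV. \<Sum>j\<in>{- int L .. int L}. h * (dg $ c' * dd $ c' * (1 / real w) *
          (if j \<le> i \<and> i \<le> j + int w - 1 then f (avg X j) e $ c' else 0)))" for h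
  proof -
    have "(\<Sum>k\<in>{j .. j + int w - 1}. if k = i then h *\<^sub>R dg else 0)
       = (if j \<le> i \<and> i \<le> j + int w - 1 then h *\<^sub>R dg else 0)" for j
      by (simp add: sum.delta')
    then have "(\<Sum>j\<in>{- int L .. int L}. \<Sum>c'\<in>UNIV. f (avg X j) e $ c' * dd $ c' *
          ((1 / real w) *\<^sub>R (\<Sum>k\<in>{j .. j + int w - 1}. if k = i then h *\<^sub>R dg else 0)) $ c')
      = (\<Sum>j\<in>{- int L .. int L}. \<Sum>c'\<in>UNIV. h * (dg $ c' * dd $ c' * (1 / real w) *
          (if j \<le> i \<and> i \<le> j + int w - 1 then f (avg X j) e $ c' else 0)))"
      by (intro sum.cong refl) (auto simp: algebra_simps)
    then show ?thesis by (simp add: sum.swap[of _ "{- int L .. int L}"])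
  qed
  show ?thesis
    unfolding has_field_derivative_def t0_def[symmetric]
    apply (rule has_derivative_eq_rhs[OF D[unfolded W_def R_def[symmetric]]])
      apply (rule ext)
      apply (unfold T1 T2 T3)
      apply (unfold avg_def)
      apply (simp only: sum_subtractf[symmetric] sum_distrib_right)
      apply (rule sum.cong[OF refl])
      apply (simp add: algebra_simps sum_distrib_left a_def dg_def avg_def)
      done
qed

lemma sum_shift_int:
  fixes h :: "int \<Rightarrow> 'a::comm_monoid_add"
  shows "(\<Sum>j\<in>{0..n}. h (j + a)) = (\<Sum>m\<in>{a..n + a}. h m)"
proof -
  have "(\<Sum>m\<in>{a..n + a}. h m) = (\<Sum>m\<in>(\<lambda>j. j + a) ` {0..n}. h m)" by simp
  also have "\<dots> = (\<Sum>j\<in>{0..n}. h (j + a))" by (subst sum.reindex) (auto simp: inj_on_def)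
  finally show ?thesis by simp
qed

lemma sum_flip_int:
  fixes h :: "int \<Rightarrow> 'a::comm_monoid_add"
  shows "(\<Sum>k\<in>{0..n}. h (i - k)) = (\<Sum>j\<in>{i - n..i}. h j)"
proof -
  have "(\<Sum>j\<in>{i - n..i}. h j) = (\<Sum>j\<in>(\<lambda>k. i - k) ` {0..n}. h j)"
    using image_diff_atLeastAtMost[of i 0 n] by simp
  also have "\<dots> = (\<Sum>k\<in>{0..n}. h (i - k))" by (subst sum.reindex) (auto simp: inj_on_def)
  finally show ?thesis by simp
qed

theorem lemma9:
  fixes f :: "real^'d \<Rightarrow> real \<Rightarrow> real^'d" and g :: "real^'d \<Rightarrow> real^'d"
    and F :: "real^'d \<Rightarrow> real \<Rightarrow> real" and G :: "real^'d \<Rightarrow> real"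
    and dd :: "real^'d" and e :: real and L w :: nat and X :: "int \<Rightarrow> real^'d"
  assumes "vector_admissible f g F G dd"
    and "e \<in> {0..1}"
    and "w \<ge> 1"
    and "\<forall>i\<in>{- int L .. int L + int w - 1}. X i \<in> cube"
    and "one_sided_fp f g L w e X"
  shows "\<exists>Up :: int \<Rightarrow> 'd \<Rightarrow> real.
           (\<forall>i\<in>{- int L .. int L + int w - 1}. \<forall>c.
              ((\<lambda>t. Ucp g F G dd L w (X(i := (\<chi> k. if k = c then t else X i $ k))) e)
                 has_real_derivative Up i c) (at (X i $ c) within {0..1}))
         \<and> (\<Sum>i\<in>{- int L .. int L + int w - 1}. \<Sum>c\<in>UNIV.
              Up i c * (shiftS L X i $ c - X i $ c)) = 0"
proof -
  note adm = assms(1)[unfolded vector_admissible_def]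
  have fc: "\<forall>x\<in>cube. \<forall>e\<in>{0..1}. f x e \<in> cube" using adm by blast
  have gc: "\<forall>x\<in>cube. g x \<in> cube" using adm by blast
  have Fd: "\<forall>x\<in>cube. ((\<lambda>y. F y e) has_derivative (\<lambda>h. \<Sum>c\<in>UNIV. f x e $ c * dd $ c * h $ c)) (at x within cube)"
    using adm assms(2) by blast
  have Gd: "\<forall>x\<in>cube. (G has_derivative (\<lambda>h. \<Sum>c\<in>UNIV. g x $ c * dd $ c * h $ c)) (at x within cube)"
    using adm by blast
  have f0: "\<forall>x\<in>cube. f x 0 = 0" using adm by blast
  have "C2_on cube g" using adm by blast
  then obtain g' :: "real^'d \<Rightarrow> ((real^'d) \<Rightarrow>\<^sub>L (real^'d))" and g''
    where g12: "\<forall>x\<in>cube. (g has_derivative blinfun_apply (g' x)) (at x within cube)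
         \<and> (g' has_derivative blinfun_apply (g'' x)) (at x within cube)"
    unfolding C2_on_def by blast
  have gd: "\<forall>x\<in>cube. (g has_derivative blinfun_apply (g' x)) (at x within cube)"
    using g12 by blast
  define i0 where "i0 = (int w - 1) div 2"
  define eps where "eps = (\<lambda>i::int. if - int L \<le> i \<and> i \<le> int L then e else 0)"
  have fp: "\<forall>i < - int L. X i = 0"
    "\<forall>i\<in>{- int L .. i0}.
            X i = (1 / real w) *\<^sub>R (\<Sum>k\<in>{0 .. int w - 1}.
                    f ((1 / real w) *\<^sub>R (\<Sum>j\<in>{0 .. int w - 1}. g (X (i + j - k)))) (eps (i - k)))"
    "\<forall>i > i0. X i = X i0"
    using assms(5) unfolding one_sided_fp_def Let_def i0_def eps_def by auto
  have i0: "0 \<le> i0" "i0 \<le> int w - 1" unfolding i0_def using assms(3) by auto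
  have Xc: "\<forall>k. X k \<in> cube"
  proof
    fix k
    have z: "(0::real^'d) \<in> cube" by (simp add: cube_def)
    show "X k \<in> cube"
    proof (cases "k < - int L")
      case True then show ?thesis using fp(1) z by auto
    next
      case False
      show ?thesis
      proof (cases "k \<le> int L + int w - 1")
        case True then show ?thesis using False assms(4) by auto
      next
        case False
        then have "X k = X i0" using fp(3) i0 by auto
        then show ?thesis using assms(4) i0 by auto
      qed
    qed
  qed
  define avg where "avg j = (1 / real w) *\<^sub>R (\<Sum>k\<in>{j .. j + int w - 1}. g (X k))" for j
  have avgc: "avg j \<in> cube" for j
    unfolding avg_def by (rule avg_cube) (use Xc gc assms(3) in auto)
  define Up where "Up i c = (\<Sum>c'\<in>UNIV. blinfun_apply (g' (X i)) (axis c 1) $ c' * dd $ c' * (X i $ c' - (1 / real w) *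
      (\<Sum>j\<in>{- int L .. int L}. if j \<le> i \<and> i \<le> j + int w - 1
          then f ((1 / real w) *\<^sub>R (\<Sum>k\<in>{j .. j + int w - 1}. g (X k))) e $ c' else 0)))" for i c
  have Up0: "Up i c = 0" if "i \<in> {- int L .. i0}" for i c
  proof -
    have "X i $ c' = (1 / real w) *
      (\<Sum>j\<in>{- int L .. int L}. if j \<le> i \<and> i \<le> j + int w - 1 then f (avg j) e $ c' else 0)" for c'
    proof -
      have inner: "(1 / real w) *\<^sub>R (\<Sum>j\<in>{0 .. int w - 1}. g (X (i + j - k))) = avg (i - k)" for k
      proof -
        have "(\<Sum>j\<in>{0 .. int w - 1}. g (X (i + j - k))) = (\<Sum>j\<in>{0 .. int w - 1}. g (X (j + (i - k))))"
          by (intro sum.cong refl) (simp add: algebra_simps)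
        also have "\<dots> = (\<Sum>m\<in>{i - k .. int w - 1 + (i - k)}. g (X m))"
          by (rule sum_shift_int[where n="int w - 1" and a="i - k"])
        also have "{i - k .. int w - 1 + (i - k)} = {i - k .. i - k + int w - 1}" by auto
        finally show ?thesis unfolding avg_def by simp
      qed
      have "X i = (1 / real w) *\<^sub>R (\<Sum>k\<in>{0 .. int w - 1}. f (avg (i - k)) (eps (i - k)))"
        using fp(2) that inner by simp
      also have "\<dots> = (1 / real w) *\<^sub>R (\<Sum>j\<in>{i - (int w - 1) .. i}. f (avg j) (eps j))"
        using sum_flip_int[where h="\<lambda>j. f (avg j) (eps j)" and n="int w - 1" and i=i] by simp
      also have "\<dots> = (1 / real w) *\<^sub>R (\<Sum>j\<in>{i - (int w - 1) .. i}. if j \<in> {- int L .. int L} then f (avg j) e else 0)"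
        using f0 avgc by (intro arg_cong[where f="\<lambda>x. _ *\<^sub>R x"] sum.cong refl) (auto simp: eps_def)
      also have "(\<Sum>j\<in>{i - (int w - 1) .. i}. if j \<in> {- int L .. int L} then f (avg j) e else 0)
          = (\<Sum>j\<in>{i - (int w - 1) .. i} \<inter> {- int L .. int L}. f (avg j) e)"
        by (rule sum.inter_restrict[symmetric]) simp
      also have "\<dots> = (\<Sum>j\<in>{- int L .. int L}. if j \<in> {i - (int w - 1) .. i} then f (avg j) e else 0)"
        by (subst Int_commute, rule sum.inter_restrict) simp
      finally have "X i = (1 / real w) *\<^sub>R (\<Sum>j\<in>{- int L .. int L}. if j \<in> {i - (int w - 1) .. i} then f (avg j) e else 0)" .
      then have "X i $ c' = (1 / real w) * (\<Sum>j\<in>{- int L .. int L}. (if j \<in> {i - (int w - 1) .. i} then f (avg j) e else 0) $ c')"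
        by (simp add: sum_component)
      also have "\<dots> = (1 / real w) *
          (\<Sum>j\<in>{- int L .. int L}. if j \<le> i \<and> i \<le> j + int w - 1 then f (avg j) e $ c' else 0)"
        by (intro arg_cong[where f="\<lambda>x. _ * x"] sum.cong refl) auto
      finally show ?thesis .
    qed
    then show ?thesis unfolding Up_def avg_def by simp
  qed
  show ?thesis
  proof (rule exI[of _ Up], intro conjI ballI allI)
    fix i c assume iR: "i \<in> {- int L .. int L + int w - 1}"
    show "((\<lambda>t. Ucp g F G dd L w (X(i := (\<chi> k. if k = c then t else X i $ k))) e)
                 has_real_derivative Up i c) (at (X i $ c) within {0..1})"
      unfolding Up_def by (rule Ucp_partial[where g'=g']) (use gd gc Gd Fd Xc assms(3) iR in auto)
  next
    show "(\<Sum>i\<in>{- int L .. int L + int w - 1}. \<Sum>c\<in>UNIV.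
              Up i c * (shiftS L X i $ c - X i $ c)) = 0"
    proof (rule sum.neutral, rule ballI)
      fix i assume iR: "i \<in> {- int L .. int L + int w - 1}"
      show "(\<Sum>c\<in>UNIV. Up i c * (shiftS L X i $ c - X i $ c)) = 0"
      proof (cases "i \<le> i0")
        case True then show ?thesis using Up0 iR by simp
      next
        case False
        then have "shiftS L X i = X i"
          using fp(3) i0 unfolding shiftS_def
          by (cases "i - 1 = i0") auto
        then show ?thesis by simp
      qed
    qed
  qed
qed

end
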